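(* Let $d\in\mathbb{N}$ and let $\mathcal{P}$ be a partition of $\mathbb{R}^{d}$. Suppose there exists $D\in(0,\infty)$ such that $D$ is a strict pairwise bound for every $X\in\mathcal{P}$, and suppose there exists $\vec{\alpha}\in\mathbb{R}^{d}$ such that $\vec{\alpha}+[0,D]^{d}$ intersects only finitely many members of $\mathcal{P}$. Then there exists $\vec{p}\in\mathbb{R}^{d}$ such that $|\mathcal{N}_{\overline{0}}(\vec{p})|\geq d+1$. Furthermore, $\mathcal{P}$ contains a $(d+1)$-clique.
   Context: On $\mathbb{R}^d$ use $d_{max}(\vec{x},\vec{y})=\max_i|x_i-y_i|$. $D$ is a strict pairwise bound for a set $X$ if $d_{max}(\vec{x},\vec{y})<D$ for all $\vec{x},\vec{y}\in X$. For $\vec{p}\in\mathbb{R}^d$, $\mathcal{N}_{\overline{0}}(\vec{p})=\{X\in\mathcal{P}:\vec{p}\in\overline{X}\}$ ($\overline{X}$ the closure). Members $X,Y$ are adjacent if $\overline{X}\cap\overline{Y}\ne\emptyset$; an $n$-clique is a set of $n$ distinct pairwise adjacent members. *)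

theory Defs
  imports "HOL-Analysis.Analysis"
begin

definition dmax :: "real^'n \<Rightarrow> real^'n \<Rightarrow> real" where
  "dmax x y = Max (range (\<lambda>i. \<bar>x $ i - y $ i\<bar>))"

definition strict_pairwise_bound :: "real \<Rightarrow> (real^'n) set \<Rightarrow> bool" where
  "strict_pairwise_bound D X \<longleftrightarrow> (\<forall>x\<in>X. \<forall>y\<in>X. dmax x y < D)"

definition is_partition :: "(real^'n) set set \<Rightarrow> bool" where
  "is_partition P \<longleftrightarrow> (\<forall>X\<in>P. X \<noteq> {}) \<and>
     (\<forall>X\<in>P. \<forall>Y\<in>P. X \<noteq> Y \<longrightarrow> X \<inter> Y = {}) \<and> \<Union>P = UNIV"

definition cube_at :: "real^'n \<Rightarrow> real \<Rightarrow> (real^'n) set" where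
  "cube_at \<alpha> D = {\<alpha> + v | v. \<forall>i. 0 \<le> v $ i \<and> v $ i \<le> D}"

definition closed_nbhd :: "(real^'n) set set \<Rightarrow> real^'n \<Rightarrow> (real^'n) set set" where
  "closed_nbhd P p = {X\<in>P. p \<in> closure X}"

definition adjacent :: "(real^'n) set \<Rightarrow> (real^'n) set \<Rightarrow> bool" where
  "adjacent X Y \<longleftrightarrow> closure X \<inter> closure Y \<noteq> {}"

definition is_clique :: "(real^'n) set set \<Rightarrow> nat \<Rightarrow> (real^'n) set set \<Rightarrow> bool" where
  "is_clique P n C \<longleftrightarrow> C \<subseteq> P \<and> finite C \<and> card C = n \<and>
     (\<forall>X\<in>C. \<forall>Y\<in>C. adjacent X Y)"

end

theory Submission
  imports Defs
begin

lemma cube_iff: "y \<in> cube_at \<alpha> D \<longleftrightarrow> (\<forall>i. \<alpha>$i \<le> y$i \<and> y$i \<le> \<alpha>$i + D)"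
  unfolding cube_at_def
  apply (rule iffI)
   apply force
  apply (rule CollectI)
  apply (rule exI[of _ "y - \<alpha>"])
  apply (auto simp: algebra_simps)
  done

lemma dmax_ge: "\<bar>x$i - y$i\<bar> \<le> dmax x y"
  unfolding dmax_def by (rule Max_ge) auto

lemma discrete:
  fixes P :: "(real^'n) set set"
  assumes part: "is_partition P" and D: "0<D" and bnd: "\<forall>X\<in>P. strict_pairwise_bound D X"
    and p: "0 < p"
  shows "\<exists>S. S \<subseteq> {X\<in>P. X \<inter> cube_at \<alpha> D \<noteq> {}} \<and> card S = CARD('n)+1 \<and>
     (\<exists>c \<in> cube_at \<alpha> D. \<forall>X\<in>S. \<exists>y\<in>X. \<forall>i. \<bar>y$i - c$i\<bar> \<le> D / real p)"
proof -
  define d where "d = CARD('n)"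
  obtain h where h: "bij_betw h {0..<d} (UNIV::'n set)"
    using ex_bij_betw_nat_finite[of "UNIV::'n set"] unfolding d_def by auto
  define k where "k = inv_into {0..<d} h"
  have k1: "k i < d" "h (k i) = i" for i
  proof -
    have hi: "i \<in> h ` {0..<d}" using h unfolding bij_betw_def by auto
    have "k i \<in> {0..<d}" unfolding k_def by (rule inv_into_into[OF hi])
    then show "k i < d" by simp
    show "h (k i) = i" unfolding k_def by (rule f_inv_into_f[OF hi])
  qed
  have k2: "k (h j) = j" if "j < d" for j
    using h that unfolding k_def bij_betw_def by (auto intro: inv_into_f_f)
  define M where "M y = (SOME X. X \<in> P \<and> y \<in> X)" for y :: "real^'n"
  have M: "M y \<in> P \<and> y \<in> M y" for y
  proof -
    have "\<exists>X. X \<in> P \<and> y \<in> X" using part unfolding is_partition_def by auto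
    then show ?thesis unfolding M_def by (rule someI_ex)
  qed
  define g where "g x = (\<chi> i. \<alpha>$i + D * real (x (k i)) / real p)" for x :: "nat \<Rightarrow> nat"
  have gh: "g x $ (h j) = \<alpha>$(h j) + D * real (x j) / real p" if "j < d" for x j
    using k2[OF that] unfolding g_def by simp
  define L where "L X = (\<lambda>j. if \<exists>y\<in>X. y$(h j) = \<alpha>$(h j) then 0 else (1::nat))" for X :: "(real^'n) set"
  define lab where "lab x = L (M (g x))" for x
  have lab0: "\<forall>x j. (\<forall>j. x j \<le> p) \<and> j < d \<and> x j = 0 \<longrightarrow> lab x j = 0"
  proof (intro allI impI)
    fix x j assume a: "(\<forall>j. x j \<le> p) \<and> j < d \<and> x j = 0"
    then have "g x $ (h j) = \<alpha>$(h j)" using gh by simp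
    then show "lab x j = 0" unfolding lab_def L_def using M[of "g x"] by auto
  qed
  have lab1: "\<forall>x j. (\<forall>j. x j \<le> p) \<and> j < d \<and> x j = p \<longrightarrow> lab x j = 1"
  proof (intro allI impI)
    fix x j assume a: "(\<forall>j. x j \<le> p) \<and> j < d \<and> x j = p"
    then have gx: "g x $ (h j) = \<alpha>$(h j) + D" using gh p by simp
    have "\<not> (\<exists>y\<in>M (g x). y$(h j) = \<alpha>$(h j))"
    proof
      assume "\<exists>y\<in>M (g x). y$(h j) = \<alpha>$(h j)"
      then obtain y where y: "y \<in> M (g x)" "y$(h j) = \<alpha>$(h j)" by auto
      have "dmax y (g x) < D" using bnd M[of "g x"] y(1)
        unfolding strict_pairwise_bound_def by blast
      moreover have "\<bar>y$(h j) - g x$(h j)\<bar> \<le> dmax y (g x)" by (rule dmax_ge)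
      ultimately show False using y(2) gx D by simp
    qed
    then show "lab x j = 1" unfolding lab_def L_def by auto
  qed
  have "odd (card {s. ksimplex p d s \<and> (reduced d \<circ> lab) ` s = {..d}})"
    using kuhn_combinatorial[OF p lab0 lab1] .
  then have "{s. ksimplex p d s \<and> (reduced d \<circ> lab) ` s = {..d}} \<noteq> {}"
    by (metis card.empty even_zero)
  then obtain s where ks: "ksimplex p d s" and rl: "(reduced d \<circ> lab) ` s = {..d}" by auto
  then obtain b u where "kuhn_simplex p d b u s" by (auto elim: ksimplex.cases)
  then interpret kuhn_simplex p d b u s .
  define S where "S = (M \<circ> g) ` s"
  have cs: "card s = Suc d" by (rule ksimplex_card[OF ks])
  have fs: "finite s" using cs by (metis card.infinite nat.distinct(1))
  have "(reduced d \<circ> lab) ` s = (\<lambda>X. reduced d (L X)) ` S"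
    unfolding S_def lab_def by (auto simp: image_image)
  then have "card {..d} \<le> card S" using rl card_image_le[of S "\<lambda>X. reduced d (L X)"] fs
    unfolding S_def by simp
  moreover have "card S \<le> card s" unfolding S_def using fs by (rule card_image_le)
  ultimately have cardS: "card S = d + 1" using cs by simp
  have gcube: "g a \<in> cube_at \<alpha> D" if "\<forall>j. a j \<le> p" for a
    unfolding cube_iff
  proof
    fix i
    have "real (a (k i)) \<le> real p" using that by simp
    then have "D * real (a (k i)) \<le> D * real p" using D by (simp add: mult_left_mono)
    then have "D * real (a (k i)) / real p \<le> D" using p
      by (simp add: pos_divide_le_eq)
    moreover have "0 \<le> D * real (a (k i)) / real p" using D by simp
    ultimately show "\<alpha>$i \<le> g a$i \<and> g a$i \<le> \<alpha>$i + D" unfolding g_def by simp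
  qed
  have Ssub: "S \<subseteq> {X\<in>P. X \<inter> cube_at \<alpha> D \<noteq> {}}"
  proof
    fix X assume "X \<in> S"
    then obtain a where a: "a \<in> s" "X = M (g a)" unfolding S_def by auto
    have "g a \<in> cube_at \<alpha> D" using gcube s_le_p[OF a(1)] by blast
    then show "X \<in> {X\<in>P. X \<inter> cube_at \<alpha> D \<noteq> {}}" using M[of "g a"] a by auto
  qed
  have bp: "\<forall>j. b j \<le> p"
  proof
    fix j show "b j \<le> p"
      using base base_out[of j] by (cases "j < d") (auto simp: Pi_iff less_imp_le)
  qed
  have close: "\<forall>X\<in>S. \<exists>y\<in>X. \<forall>i. \<bar>y$i - g b$i\<bar> \<le> D / real p"
  proof
    fix X assume "X \<in> S"
    then obtain a where a: "a \<in> s" "X = M (g a)" unfolding S_def by auto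
    show "\<exists>y\<in>X. \<forall>i. \<bar>y$i - g b$i\<bar> \<le> D / real p"
    proof (intro bexI allI)
      show "g a \<in> X" using M a by auto
      fix i
      have "b (k i) \<le> a (k i)" "a (k i) \<le> Suc (b (k i))"
        using base_le[OF a(1)] le_Suc_base[OF a(1)] by auto
      then have e: "0 \<le> real (a (k i)) - real (b (k i))" "real (a (k i)) - real (b (k i)) \<le> 1" by auto
      have "g a$i - g b$i = D * (real (a (k i)) - real (b (k i))) / real p"
        unfolding g_def by (simp add: algebra_simps diff_divide_distrib)
      moreover have "0 \<le> D * (real (a (k i)) - real (b (k i))) / real p" using e D by simp
      moreover have "D * (real (a (k i)) - real (b (k i))) / real p \<le> D / real p"
        using e D p by (simp add: divide_right_mono)
      ultimately show "\<bar>g a$i - g b$i\<bar> \<le> D / real p" by simp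
    qed
  qed
  show ?thesis using Ssub cardS close gcube[OF bp] unfolding d_def by blast
qed

lemma cube_cbox: "cube_at \<alpha> D = cbox \<alpha> (\<chi> i. \<alpha>$i + D)"
  by (auto simp: cube_iff mem_box_cart)

lemma approx_step:
  fixes P :: "(real^'n) set set"
  assumes part: "is_partition P" and D: "0<D" and bnd: "\<forall>X\<in>P. strict_pairwise_bound D X"
    and e: "0 < e"
  shows "\<exists>S. S \<subseteq> {X\<in>P. X \<inter> cube_at \<alpha> D \<noteq> {}} \<and> card S = CARD('n)+1 \<and>
     (\<exists>c \<in> cube_at \<alpha> D. \<forall>X\<in>S. \<exists>y\<in>X. dist y c \<le> e)"
proof -
  define d where "d = CARD('n)"
  obtain p :: nat where pgt: "real d * D / e < real p" using reals_Archimedean2 by blast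
  have "0 < real d * D / e" using D e by (simp add: d_def)
  then have p0: "0 < p" using pgt by linarith
  have le: "real d * (D / real p) \<le> e"
  proof -
    have "real d * D < e * real p" using pgt e by (simp add: pos_divide_less_eq mult.commute)
    then show ?thesis using p0 by (simp add: pos_divide_le_eq)
  qed
  obtain S c where S: "S \<subseteq> {X\<in>P. X \<inter> cube_at \<alpha> D \<noteq> {}}" "card S = CARD('n)+1"
     "c \<in> cube_at \<alpha> D" "\<forall>X\<in>S. \<exists>y\<in>X. \<forall>i. \<bar>y$i - c$i\<bar> \<le> D / real p"
    using discrete[OF part D bnd p0, of \<alpha>] by blast
  have "\<forall>X\<in>S. \<exists>y\<in>X. dist y c \<le> e"
  proof
    fix X assume "X \<in> S"
    then obtain y where y: "y \<in> X" "\<forall>i. \<bar>y$i - c$i\<bar> \<le> D / real p" using S by blast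
    have "dist y c \<le> (\<Sum>i\<in>UNIV. \<bar>(y - c)$i\<bar>)" unfolding dist_norm by (rule norm_le_l1_cart)
    also have "\<dots> \<le> of_nat (card (UNIV::'n set)) * (D / real p)"
      by (rule sum_bounded_above) (use y in simp)
    also have "\<dots> \<le> e" using le by (simp add: d_def)
    finally show "\<exists>y\<in>X. dist y c \<le> e" using y by blast
  qed
  then show ?thesis using S by blast
qed

theorem mainTheorem5:
  fixes P :: "(real^'n) set set"
  assumes "is_partition P"
    and "0 < D"
    and "\<forall>X\<in>P. strict_pairwise_bound D X"
    and "finite {X\<in>P. X \<inter> cube_at \<alpha> D \<noteq> {}}"
  shows "(\<exists>p. infinite (closed_nbhd P p) \<or> card (closed_nbhd P p) \<ge> CARD('n) + 1)
         \<and> (\<exists>C. is_clique P (CARD('n) + 1) C)"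
proof -
  define F where "F = {X\<in>P. X \<inter> cube_at \<alpha> D \<noteq> {}}"
  define Fam where "Fam = {S. S \<subseteq> F \<and> card S = CARD('n)+1}"
  define W where "W S e = (\<exists>c \<in> cube_at \<alpha> D. \<forall>X\<in>S. \<exists>y\<in>X. dist y c \<le> e)" for S e
  have finFam: "finite Fam" unfolding Fam_def using assms(4) unfolding F_def[symmetric]
    by (rule rev_finite_subset[OF finite_Pow_iff[THEN iffD2]]) auto
  have ex: "\<exists>S\<in>Fam. W S e" if "e > 0" for e
    using approx_step[OF assms(1-3) that, of \<alpha>] unfolding Fam_def W_def F_def by blast
  have mono: "W S e' \<Longrightarrow> e' \<le> e \<Longrightarrow> W S e" for S e e'
    unfolding W_def by (meson order_trans)
  have "\<exists>S\<in>Fam. \<forall>e>0. W S e"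
  proof (rule ccontr)
    assume "\<not> ?thesis"
    then have "\<forall>S\<in>Fam. \<exists>e. e > 0 \<and> \<not> W S e" by auto
    then obtain E where E: "\<forall>S\<in>Fam. E S > 0 \<and> \<not> W S (E S)" by metis
    have neFam: "Fam \<noteq> {}" using ex[of 1] by auto
    define e0 where "e0 = Min (E ` Fam)"
    have "e0 > 0" unfolding e0_def using finFam neFam E by (subst Min_gr_iff) auto
    then obtain S where S: "S \<in> Fam" "W S e0" using ex by blast
    have "e0 \<le> E S" unfolding e0_def using finFam S(1) by simp
    then have "W S (E S)" using mono S(2) by blast
    then show False using E S(1) by blast
  qed
  then obtain S where SF: "S \<in> Fam" and SW: "\<forall>e>0. W S e" by blast
  have "\<forall>n. \<exists>c. c \<in> cube_at \<alpha> D \<and> (\<forall>X\<in>S. \<exists>y\<in>X. dist y c \<le> 1 / real (Suc n))"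
  proof
    fix n
    have "W S (1 / real (Suc n))" using SW by simp
    then show "\<exists>c. c \<in> cube_at \<alpha> D \<and> (\<forall>X\<in>S. \<exists>y\<in>X. dist y c \<le> 1 / real (Suc n))"
      unfolding W_def by blast
  qed
  then obtain c where c: "\<And>n. c n \<in> cube_at \<alpha> D"
     "\<And>n. \<forall>X\<in>S. \<exists>y\<in>X. dist y (c n) \<le> 1 / real (Suc n)" by metis
  have "compact (cube_at \<alpha> D)" unfolding cube_cbox by (rule compact_cbox)
  then have "seq_compact (cube_at \<alpha> D)" by (rule compact_imp_seq_compact)
  then obtain q r where q: "q \<in> cube_at \<alpha> D" and r: "strict_mono r" and lim: "(c \<circ> r) \<longlonglongrightarrow> q"
    using c(1) by (metis seq_compactE)
  have qcl: "q \<in> closure X" if X: "X \<in> S" for X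
    unfolding closure_approachable
  proof (intro allI impI)
    fix e :: real assume e: "e > 0"
    then have "e/2 > 0" by simp
    then obtain N where N: "\<And>n. n \<ge> N \<Longrightarrow> dist ((c \<circ> r) n) q < e/2"
      using lim by (metis LIMSEQ_D dist_norm)
    obtain M :: nat where M: "2 / e < real M" using reals_Archimedean2 by blast
    define n where "n = max N M"
    have "n \<le> r n" using r by (rule seq_suble)
    then have "real M \<le> real (r n)" unfolding n_def by simp
    then have "2 / e < real (Suc (r n))" using M by simp
    then have small: "1 / real (Suc (r n)) < e / 2" using e
      by (simp add: divide_less_eq mult.commute)
    obtain y where y: "y \<in> X" "dist y (c (r n)) \<le> 1 / real (Suc (r n))" using c(2) X by blast
    have "dist (c (r n)) q < e/2" using N[of n] unfolding n_def by simp
    then have "dist y q < e" using y(2) small dist_triangle[of y q "c (r n)"] by linarith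
    then show "\<exists>y\<in>X. dist y q < e" using y(1) by blast
  qed
  have SP: "S \<subseteq> P" and cardS: "card S = CARD('n)+1" and finS: "finite S"
    using SF unfolding Fam_def F_def by (auto intro: card_ge_0_finite)
  have sub: "S \<subseteq> closed_nbhd P q" unfolding closed_nbhd_def using SP qcl by auto
  have part1: "infinite (closed_nbhd P q) \<or> card (closed_nbhd P q) \<ge> CARD('n) + 1"
    using card_mono[OF _ sub] cardS by auto
  have "is_clique P (CARD('n) + 1) S"
    unfolding is_clique_def adjacent_def using SP cardS finS qcl by blast
  then show ?thesis using part1 by blast
qed

end
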